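(* Let $E$ be a finite set and $\mathcal{A}$ a set-arrangement on $E$, with local Lie algebras $L_A=\mathcal{F}(A)/\langle R_A\rangle$, $R_A\subseteq[\mathcal{F}(A),\mathcal{F}(A)]$, for $A\in\mathcal{A}$, and let $\mathcal{L}=\mathcal{F}(E)/\langle R\rangle$ with $$R=\bigcup_{A\in\mathcal{A}}R_A\ \cup\ \{[x,y]:\ x,y\in E,\ \{x,y\}\not\subseteq A \text{ for every } A\in\mathcal{A}\}.$$ Let $\mathcal{B}_1,\dots,\mathcal{B}_k$ be pairwise disjoint subsets of $\mathcal{A}$, each closed in $\mathcal{A}$, with $\bigcup_{i=1}^k\mathcal{B}_i=\mathcal{A}$. For each $i$ let $\pi_{\mathcal{B}_i}:\mathcal{L}\to L_{\mathcal{B}_i}$ be the Lie homomorphism sending the elements of $E\setminus\mathrm{supp}(\mathcal{B}_i)$ to $0$ and fixing those of $\mathrm{supp}(\mathcal{B}_i)$, and $s_{\mathcal{B}_i}:L_{\mathcal{B}_i}\to\mathcal{L}$ the Lie homomorphism induced by the inclusion $\mathrm{supp}(\mathcal{B}_i)\subseteq E$. Let $\pi'_{\mathcal{B}_i}$, $s'_{\mathcal{B}_i}$ be their restrictions to the derived algebras, and let $J$ be the kernel of the surjective Lie homomorphism $\bigoplus_{i=1}^k\pi'_{\mathcal{B}_i}:\mathcal{L}'\to\bigoplus_{i=1}^kL'_{\mathcal{B}_i}$. Then: (1) $J$ is generated as an ideal of $\mathcal{L}$ by the elements $[x,s'_{\mathcal{B}_i}(u)]$ for $i=1,\dots,k$,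 $u\in L'_{\mathcal{B}_i}$ and $x\in E\setminus\mathrm{supp}(\mathcal{B}_i)$; (2) $J=0$ if and only if $[x,s'_{\mathcal{B}_i}(L'_{\mathcal{B}_i})]=0$ for all $i$ and all $x\in E\setminus\mathrm{supp}(\mathcal{B}_i)$.
   Context: All Lie algebras are over a fixed field; $\mathcal{F}(X)$ is the free Lie algebra on $X$, $\langle S\rangle$ the ideal generated by $S$, and $M'=[M,M]$ the derived algebra. A set-arrangement on a finite set $E$ is a set $\mathcal{A}$ of subsets of $E$ with $|A|\ge3$ for all $A\in\mathcal{A}$ and $|A\cap B|\le1$ for distinct $A,B\in\mathcal{A}$. For $\mathcal{B}\subseteq\mathcal{A}$ put $\mathrm{supp}(\mathcal{B})=\bigcup_{B\in\mathcal{B}}B$; $\mathcal{B}$ is closed in $\mathcal{A}$ if $|A\cap\mathrm{supp}(\mathcal{B})|\le1$ for all $A\in\mathcal{A}\setminus\mathcal{B}$. For such $\mathcal{B}$, $L_{\mathcal{B}}=\mathcal{F}(\mathrm{supp}(\mathcal{B}))/\langle R_{\mathcal{B}}\rangle$ where $R_{\mathcal{B}}=\bigcup_{B\in\mathcal{B}}R_B\cup\{[x,y]:\ x,y\in\mathrm{supp}(\mathcal{B}),\ \{x,y\}\not\subseteq B\text{ for all }B\in\mathcal{B}\}$. Elements of $E$ are identified with their images in $\mathcal{L}$. *)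

theory Defs
  imports Main
begin

text \<open>Free nonassociative (magma) algebra over a field on a set S of generators:
  finitely supported coefficient functions on binary trees with leaves in S.
  A Lie algebra presented as F(S)/<R> is represented as this magma algebra modulo
  the two-sided ideal generated by the Lie identities ([a,a] = 0, Jacobi) and R.\<close>

datatype 'a ltree = Leaf 'a | Br "'a ltree" "'a ltree"

primrec leaves :: "'a ltree \<Rightarrow> 'a set" where
  "leaves (Leaf x) = {x}"
| "leaves (Br s t) = leaves s \<union> leaves t"

definition mag :: "'a set \<Rightarrow> ('a ltree \<Rightarrow> 'k::zero) set" where
  "mag S = {f. finite {t. f t \<noteq> 0} \<and> (\<forall>t. f t \<noteq> 0 \<longrightarrow> leaves t \<subseteq> S)}"

definition madd :: "('a ltree \<Rightarrow> 'k::field) \<Rightarrow> ('a ltree \<Rightarrow> 'k) \<Rightarrow> ('a ltree \<Rightarrow> 'k)" where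
  "madd f g = (\<lambda>t. f t + g t)"

definition msub :: "('a ltree \<Rightarrow> 'k::field) \<Rightarrow> ('a ltree \<Rightarrow> 'k) \<Rightarrow> ('a ltree \<Rightarrow> 'k)" where
  "msub f g = (\<lambda>t. f t - g t)"

definition msmult :: "'k::field \<Rightarrow> ('a ltree \<Rightarrow> 'k) \<Rightarrow> ('a ltree \<Rightarrow> 'k)" where
  "msmult c f = (\<lambda>t. c * f t)"

definition br :: "('a ltree \<Rightarrow> 'k::field) \<Rightarrow> ('a ltree \<Rightarrow> 'k) \<Rightarrow> ('a ltree \<Rightarrow> 'k)" where
  "br f g = (\<lambda>u. case u of Leaf _ \<Rightarrow> 0 | Br s t \<Rightarrow> f s * g t)"

definition gen :: "'a \<Rightarrow> ('a ltree \<Rightarrow> 'k::field)" where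
  "gen x = (\<lambda>t. if t = Leaf x then 1 else 0)"

text \<open>The algebra homomorphism fixing generators in S and sending the others to 0.\<close>
definition proj :: "'a set \<Rightarrow> ('a ltree \<Rightarrow> 'k::field) \<Rightarrow> ('a ltree \<Rightarrow> 'k)" where
  "proj S f = (\<lambda>t. if leaves t \<subseteq> S then f t else 0)"

definition jacobi :: "('a ltree \<Rightarrow> 'k::field) \<Rightarrow> ('a ltree \<Rightarrow> 'k) \<Rightarrow> ('a ltree \<Rightarrow> 'k) \<Rightarrow> ('a ltree \<Rightarrow> 'k)" where
  "jacobi a b c = madd (br a (br b c)) (madd (br b (br c a)) (br c (br a b)))"

definition lie_rels :: "'a set \<Rightarrow> ('a ltree \<Rightarrow> 'k::field) set" where
  "lie_rels S = {br a a | a. a \<in> mag S}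
     \<union> {jacobi a b c | a b c. a \<in> mag S \<and> b \<in> mag S \<and> c \<in> mag S}"

inductive_set ideal_gen :: "'a set \<Rightarrow> ('a ltree \<Rightarrow> 'k::field) set \<Rightarrow> ('a ltree \<Rightarrow> 'k) set"
  for S G where
  gen: "g \<in> G \<Longrightarrow> g \<in> ideal_gen S G"
| zero: "(\<lambda>_. 0) \<in> ideal_gen S G"
| add: "f \<in> ideal_gen S G \<Longrightarrow> g \<in> ideal_gen S G \<Longrightarrow> madd f g \<in> ideal_gen S G"
| smult: "f \<in> ideal_gen S G \<Longrightarrow> msmult c f \<in> ideal_gen S G"
| left: "f \<in> ideal_gen S G \<Longrightarrow> a \<in> mag S \<Longrightarrow> br a f \<in> ideal_gen S G"
| right: "f \<in> ideal_gen S G \<Longrightarrow> a \<in> mag S \<Longrightarrow> br f a \<in> ideal_gen S G"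

definition pres_ideal :: "'a set \<Rightarrow> ('a ltree \<Rightarrow> 'k::field) set \<Rightarrow> ('a ltree \<Rightarrow> 'k) set" where
  "pres_ideal S R = ideal_gen S (lie_rels S \<union> R)"

inductive_set bracket_span :: "'a set \<Rightarrow> ('a ltree \<Rightarrow> 'k::field) set" for S where
  zero: "(\<lambda>_. 0) \<in> bracket_span S"
| brk: "a \<in> mag S \<Longrightarrow> b \<in> mag S \<Longrightarrow> br a b \<in> bracket_span S"
| add: "f \<in> bracket_span S \<Longrightarrow> g \<in> bracket_span S \<Longrightarrow> madd f g \<in> bracket_span S"

text \<open>Representatives of the derived algebra [M,M] of M = mag S / I.\<close>
definition derived :: "'a set \<Rightarrow> ('a ltree \<Rightarrow> 'k::field) set \<Rightarrow> ('a ltree \<Rightarrow> 'k) set" where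
  "derived S I = {f \<in> mag S. \<exists>g \<in> bracket_span S. msub f g \<in> I}"

definition set_arrangement :: "'a set \<Rightarrow> 'a set set \<Rightarrow> bool" where
  "set_arrangement E \<A> \<longleftrightarrow> (\<forall>A\<in>\<A>. A \<subseteq> E \<and> card A \<ge> 3)
     \<and> (\<forall>A\<in>\<A>. \<forall>B\<in>\<A>. A \<noteq> B \<longrightarrow> card (A \<inter> B) \<le> 1)"

definition supp :: "'a set set \<Rightarrow> 'a set" where
  "supp \<B> = \<Union>\<B>"

definition closed_in_arr :: "'a set set \<Rightarrow> 'a set set \<Rightarrow> bool" where
  "closed_in_arr \<A> \<B> \<longleftrightarrow> \<B> \<subseteq> \<A> \<and> (\<forall>A\<in>\<A> - \<B>. card (A \<inter> supp \<B>) \<le> 1)"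

definition arr_rels :: "'a set set \<Rightarrow> ('a set \<Rightarrow> ('a ltree \<Rightarrow> 'k::field) set) \<Rightarrow> 'a set
    \<Rightarrow> ('a ltree \<Rightarrow> 'k) set" where
  "arr_rels \<B> RA S = (\<Union>B\<in>\<B>. RA B)
     \<union> {br (gen x) (gen y) | x y. x \<in> S \<and> y \<in> S \<and> (\<forall>B\<in>\<B>. \<not> {x, y} \<subseteq> B)}"

end

theory Submission
  imports Defs "HOL-Library.Function_Algebras"
begin

definition dl :: "'a ltree \<Rightarrow> ('a ltree \<Rightarrow> 'k::field)" where
  "dl t = (\<lambda>u. if u = t then 1 else 0)"

lemma madd_eq: "madd f g = f + g" by (simp add: madd_def fun_eq_iff)
lemma msub_eq: "msub f g = f - g" by (simp add: msub_def fun_eq_iff)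
lemma zero_eq: "(\<lambda>_. 0) = (0::'b \<Rightarrow> 'k::zero)" by (simp add: fun_eq_iff)

lemma br_add1: "br (f + g) h = br f h + br g h"
  by (simp add: br_def fun_eq_iff algebra_simps split: ltree.split)
lemma br_add2: "br h (f + g) = br h f + br h g"
  by (simp add: br_def fun_eq_iff algebra_simps split: ltree.split)
lemma br_sub1: "br (f - g) h = br f h - br g h"
  by (simp add: br_def fun_eq_iff algebra_simps split: ltree.split)
lemma br_sub2: "br h (f - g) = br h f - br h g"
  by (simp add: br_def fun_eq_iff algebra_simps split: ltree.split)
lemma br_neg1: "br (- f) h = - br f h"
  by (simp add: br_def fun_eq_iff algebra_simps split: ltree.split)
lemma br_neg2: "br h (- f) = - br h f"
  by (simp add: br_def fun_eq_iff algebra_simps split: ltree.split)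
lemma br_zero1[simp]: "br 0 h = 0"
  by (simp add: br_def fun_eq_iff split: ltree.split)
lemma br_zero2[simp]: "br h 0 = 0"
  by (simp add: br_def fun_eq_iff split: ltree.split)
lemma br_smult1: "br (msmult c f) h = msmult c (br f h)"
  by (simp add: br_def msmult_def fun_eq_iff algebra_simps split: ltree.split)
lemma br_smult2: "br h (msmult c f) = msmult c (br h f)"
  by (simp add: br_def msmult_def fun_eq_iff algebra_simps split: ltree.split)
lemma br_sum2: "br h (\<Sum>i\<in>I. f i) = (\<Sum>i\<in>I. br h (f i :: 'a ltree \<Rightarrow> 'k::field))"
proof (induction I rule: infinite_finite_induct)
  case (infinite A) then show ?case by (metis br_zero2 sum.infinite)
next
  case empty then show ?case by (metis br_zero2 sum.empty)
next
  case (insert x F) then show ?case by (metis br_add2 sum.insert)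
qed
lemma msmult_neg: "msmult (-1) f = - f"
  by (simp add: msmult_def fun_eq_iff)
lemma br_dl: "br (dl s) (dl t) = dl (Br s t)"
  by (simp add: br_def dl_def fun_eq_iff split: ltree.split)
lemma gen_dl: "gen x = dl (Leaf x)"
  by (simp add: gen_def dl_def)

lemma br_Leaf[simp]: "br f g (Leaf x) = 0" by (simp add: br_def)
lemma br_Br[simp]: "br f g (Br s t) = f s * g t" by (simp add: br_def)

lemma mag_zero[simp]: "(0::'a ltree \<Rightarrow> 'k::field) \<in> mag S" by (simp add: mag_def)
lemma mag_zero'[simp]: "((\<lambda>_. 0)::'a ltree \<Rightarrow> 'k::field) \<in> mag S" by (simp add: mag_def)
lemma mag_add: "(f::'a ltree \<Rightarrow> 'k::field) \<in> mag S \<Longrightarrow> g \<in> mag S \<Longrightarrow> f + g \<in> mag S"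
proof -
  assume a: "f \<in> mag S" "g \<in> mag S"
  have "{t. (f+g) t \<noteq> 0} \<subseteq> {t. f t \<noteq> 0} \<union> {t. g t \<noteq> 0}" by auto
  moreover have "\<forall>t. (f+g) t \<noteq> 0 \<longrightarrow> leaves t \<subseteq> S" using a by (force simp: mag_def)
  ultimately show ?thesis using a unfolding mag_def by (auto intro: finite_subset)
qed
lemma mag_neg: "(f::'a ltree \<Rightarrow> 'k::field) \<in> mag S \<Longrightarrow> - f \<in> mag S"
  by (simp add: mag_def)
lemma mag_sub: "(f::'a ltree \<Rightarrow> 'k::field) \<in> mag S \<Longrightarrow> g \<in> mag S \<Longrightarrow> f - g \<in> mag S"
  using mag_add[of f S "-g"] mag_neg[of g S] by simp
lemma mag_smult: "f \<in> mag S \<Longrightarrow> msmult c f \<in> mag S"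
proof -
  assume a: "f \<in> mag S"
  have "{t. msmult c f t \<noteq> 0} \<subseteq> {t. f t \<noteq> 0}" by (auto simp: msmult_def)
  then show ?thesis using a unfolding mag_def by (auto intro: finite_subset simp: msmult_def)
qed
lemma mag_sum: "(\<And>i. i \<in> I \<Longrightarrow> (f i::'a ltree \<Rightarrow> 'k::field) \<in> mag S) \<Longrightarrow> (\<Sum>i\<in>I. f i) \<in> mag S"
  by (induction I rule: infinite_finite_induct) (auto intro: mag_add)
lemma mag_br: "f \<in> mag S \<Longrightarrow> g \<in> mag S \<Longrightarrow> br f g \<in> mag S"
proof -
  assume a: "f \<in> mag S" "g \<in> mag S"
  have "{u. br f g u \<noteq> 0} \<subseteq> (\<lambda>(s,t). Br s t) ` ({s. f s \<noteq> 0} \<times> {t. g t \<noteq> 0})"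
  proof
    fix u assume "u \<in> {u. br f g u \<noteq> 0}"
    then show "u \<in> (\<lambda>(s,t). Br s t) ` ({s. f s \<noteq> 0} \<times> {t. g t \<noteq> 0})"
      by (cases u) (auto simp: image_iff)
  qed
  moreover have "finite ((\<lambda>(s,t). Br s t) ` ({s. f s \<noteq> 0} \<times> {t. g t \<noteq> 0}))"
    using a by (auto simp: mag_def)
  ultimately have "finite {u. br f g u \<noteq> 0}" by (rule finite_subset)
  moreover have "\<forall>u. br f g u \<noteq> 0 \<longrightarrow> leaves u \<subseteq> S"
  proof (intro allI impI)
    fix u assume "br f g u \<noteq> 0"
    then show "leaves u \<subseteq> S" using a by (cases u) (auto simp: mag_def)
  qed
  ultimately show ?thesis by (simp add: mag_def)
qed
lemma mag_dl: "leaves t \<subseteq> S \<Longrightarrow> dl t \<in> mag S"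
  by (simp add: mag_def dl_def)
lemma mag_gen: "x \<in> S \<Longrightarrow> gen x \<in> mag S"
  by (simp add: gen_dl mag_dl)
lemma mag_mono: "S \<subseteq> T \<Longrightarrow> f \<in> mag S \<Longrightarrow> f \<in> mag T"
  by (auto simp: mag_def)

lemma decomp_aux:
  fixes P :: "('a ltree \<Rightarrow> 'k::field) set"
  assumes "finite T" and P0: "0 \<in> P" and Padd: "\<And>f g. f \<in> P \<Longrightarrow> g \<in> P \<Longrightarrow> f + g \<in> P"
    and Psm: "\<And>c f. f \<in> P \<Longrightarrow> msmult c f \<in> P"
  shows "\<forall>f. {t. f t \<noteq> 0} \<subseteq> T \<longrightarrow> (\<forall>t. f t \<noteq> 0 \<longrightarrow> dl t \<in> P) \<longrightarrow> f \<in> P"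
  using assms(1)
proof (induction T rule: finite_induct)
  case empty
  then show ?case using P0 by (auto simp: fun_eq_iff zero_fun_def)
next
  case (insert t T)
  show ?case
  proof (intro allI impI)
    fix f :: "'a ltree \<Rightarrow> 'k"
    assume s: "{t. f t \<noteq> 0} \<subseteq> insert t T" and d: "\<forall>t. f t \<noteq> 0 \<longrightarrow> dl t \<in> P"
    define g where "g = f(t := 0)"
    have "{t. g t \<noteq> 0} \<subseteq> T" using s by (auto simp: g_def)
    moreover have "\<forall>t. g t \<noteq> 0 \<longrightarrow> dl t \<in> P" using d by (auto simp: g_def)
    ultimately have "g \<in> P" using insert.IH by blast
    moreover have "msmult (f t) (dl t) \<in> P"
    proof (cases "f t = 0")
      case True
      then have "msmult (f t) (dl t) = msmult 0 0" by (simp add: msmult_def fun_eq_iff)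
      then show ?thesis using Psm[OF P0] by simp
    next
      case False then show ?thesis using d Psm by auto
    qed
    moreover have "f = g + msmult (f t) (dl t)"
      by (auto simp: g_def msmult_def dl_def fun_eq_iff)
    ultimately show "f \<in> P" using Padd by metis
  qed
qed

lemma decomp:
  fixes P :: "('a ltree \<Rightarrow> 'k::field) set"
  assumes "finite {t. f t \<noteq> 0}" and "0 \<in> P" and "\<And>f g. f \<in> P \<Longrightarrow> g \<in> P \<Longrightarrow> f + g \<in> P"
    and "\<And>c f. f \<in> P \<Longrightarrow> msmult c f \<in> P"
    and "\<And>t. f t \<noteq> 0 \<Longrightarrow> dl t \<in> P"
  shows "f \<in> P"
  using decomp_aux[OF assms(1-4)] assms(5) by blast

lemma ig_zero[simp]: "(0::'a ltree \<Rightarrow> 'k::field) \<in> ideal_gen S G"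
  using ideal_gen.zero[of S G] by (simp add: zero_eq)
lemma ig_zero'[simp]: "((\<lambda>_. 0)::'a ltree \<Rightarrow> 'k::field) \<in> ideal_gen S G"
  by (rule ideal_gen.zero)
lemma ig_add: "f \<in> ideal_gen S G \<Longrightarrow> g \<in> ideal_gen S G \<Longrightarrow> f + g \<in> ideal_gen S G"
  using ideal_gen.add by (metis madd_eq)
lemma ig_smult: "f \<in> ideal_gen S G \<Longrightarrow> msmult c f \<in> ideal_gen S G"
  by (rule ideal_gen.smult)
lemma ig_neg: "f \<in> ideal_gen S G \<Longrightarrow> - f \<in> ideal_gen S G"
  using ideal_gen.smult[of f S G "-1"] by (simp add: msmult_neg)
lemma ig_sub: "f \<in> ideal_gen S G \<Longrightarrow> g \<in> ideal_gen S G \<Longrightarrow> f - g \<in> ideal_gen S G"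
  using ig_add[of f S G "-g"] ig_neg[of g S G] by simp
lemma ig_sum: "(\<And>i. i \<in> I \<Longrightarrow> f i \<in> ideal_gen S G) \<Longrightarrow> (\<Sum>i\<in>I. f i) \<in> ideal_gen S G"
proof (induction I rule: infinite_finite_induct)
  case (infinite A) then show ?case by (metis ig_zero sum.infinite)
next
  case empty then show ?case by (metis ig_zero sum.empty)
next
  case (insert x F) then show ?case by (metis ig_add insertI1 insertI2 sum.insert)
qed
lemma ig_left: "a \<in> mag S \<Longrightarrow> f \<in> ideal_gen S G \<Longrightarrow> br a f \<in> ideal_gen S G"
  by (rule ideal_gen.left)
lemma ig_right: "a \<in> mag S \<Longrightarrow> f \<in> ideal_gen S G \<Longrightarrow> br f a \<in> ideal_gen S G"
  by (rule ideal_gen.right)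
lemma ig_gen: "g \<in> G \<Longrightarrow> g \<in> ideal_gen S G"
  by (rule ideal_gen.gen)

lemma ig_mono:
  assumes "S \<subseteq> S'" and "G \<subseteq> ideal_gen S' G'"
  shows "ideal_gen S G \<subseteq> ideal_gen S' G'"
proof
  fix f assume "f \<in> ideal_gen S G"
  then show "f \<in> ideal_gen S' G'"
    by induction (use assms in \<open>auto intro: ideal_gen.intros mag_mono\<close>)
qed

lemma ig_mag:
  assumes "G \<subseteq> mag S"
  shows "ideal_gen S G \<subseteq> mag S"
proof
  fix f assume "f \<in> ideal_gen S G"
  then show "f \<in> mag S"
  proof induction
    case (add f g) then show ?case by (metis madd_eq mag_add)
  qed (use assms in \<open>auto intro: mag_br mag_smult simp: zero_eq\<close>)
qed

lemma lie_sq: "a \<in> mag S \<Longrightarrow> br a a \<in> lie_rels S"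
  by (auto simp: lie_rels_def)
lemma lie_jac: "a \<in> mag S \<Longrightarrow> b \<in> mag S \<Longrightarrow> c \<in> mag S \<Longrightarrow> jacobi a b c \<in> lie_rels S"
  by (auto simp: lie_rels_def)

lemma lie_rels_mag: "lie_rels S \<subseteq> (mag S :: ('a ltree \<Rightarrow> 'k::field) set)"
  by (auto simp: lie_rels_def jacobi_def madd_eq intro!: mag_br mag_add)

lemma antisym:
  assumes "a \<in> mag S" "b \<in> mag S" "lie_rels S \<subseteq> G"
  shows "br a b + br b a \<in> ideal_gen S G"
proof -
  have "br (a+b) (a+b) - br a a - br b b = br a b + br b a"
    by (simp add: br_add1 br_add2 algebra_simps)
  moreover have "br (a+b) (a+b) \<in> ideal_gen S G" "br a a \<in> ideal_gen S G" "br b b \<in> ideal_gen S G"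
    using assms lie_sq mag_add by (blast intro: ig_gen)+
  ultimately show ?thesis by (metis ig_sub)
qed

lemma jac_in:
  assumes "a \<in> mag S" "b \<in> mag S" "c \<in> mag S" "lie_rels S \<subseteq> G"
  shows "br a (br b c) + br b (br c a) + br c (br a b) \<in> ideal_gen S G"
  using lie_jac[OF assms(1-3)] assms(4) ig_gen unfolding jacobi_def madd_eq
  by (metis add.assoc subsetD)

lemma proj_add: "proj S (f + g) = proj S f + proj S g"
  by (simp add: proj_def fun_eq_iff)
lemma proj_sub: "proj S (f - g) = proj S f - proj S (g :: 'a ltree \<Rightarrow> 'k::field)"
  by (simp add: proj_def fun_eq_iff)
lemma proj_zero[simp]: "proj S 0 = (0 :: 'a ltree \<Rightarrow> 'k::field)"
  by (simp add: proj_def fun_eq_iff)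
lemma proj_smult: "proj S (msmult c f) = msmult c (proj S f)"
  by (simp add: proj_def msmult_def fun_eq_iff)
lemma proj_br: "proj S (br f g) = br (proj S f) (proj S g)"
  by (simp add: proj_def br_def fun_eq_iff split: ltree.split)
lemma proj_sum: "proj S (\<Sum>i\<in>I. f i) = (\<Sum>i\<in>I. proj S (f i :: 'a ltree \<Rightarrow> 'k::field))"
proof (induction I rule: infinite_finite_induct)
  case (infinite A) then show ?case by (metis proj_zero sum.infinite)
next
  case empty then show ?case by (metis proj_zero sum.empty)
next
  case (insert x F) then show ?case by (simp only: sum.insert[OF insert(1,2)] proj_add insert(3))
qed
lemma proj_gen: "proj S (gen x) = (if x \<in> S then gen x else (0 :: 'a ltree \<Rightarrow> 'k::field))"
  by (auto simp: proj_def gen_def fun_eq_iff)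
lemma proj_id: "f \<in> mag S \<Longrightarrow> proj S f = f"
  by (auto simp: proj_def mag_def fun_eq_iff)
lemma proj_mag: "f \<in> mag T \<Longrightarrow> proj S f \<in> mag S"
proof -
  assume a: "f \<in> mag T"
  have sub: "{t. proj S f t \<noteq> 0} \<subseteq> {t. f t \<noteq> 0}" by (auto simp: proj_def)
  have fin: "finite {t. f t \<noteq> 0}" using a by (simp add: mag_def)
  have "finite {t. proj S f t \<noteq> 0}" by (rule finite_subset[OF sub fin])
  moreover have "\<forall>t. proj S f t \<noteq> 0 \<longrightarrow> leaves t \<subseteq> S" by (simp add: proj_def)
  ultimately show ?thesis by (simp add: mag_def)
qed

lemma proj_ideal:
  assumes "\<And>g. g \<in> G \<Longrightarrow> proj S g \<in> ideal_gen S G'"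
    and "f \<in> ideal_gen T G"
  shows "proj S f \<in> ideal_gen S G'"
  using assms(2)
proof induction
  case (gen g) then show ?case using assms(1) by blast
next
  case zero then show ?case by (simp add: zero_eq)
next
  case (add f g) then show ?case by (metis madd_eq proj_add ig_add)
next
  case (smult f c) then show ?case by (simp add: proj_smult ig_smult)
next
  case (left f a) then show ?case by (simp add: proj_br ig_left proj_mag)
next
  case (right f a) then show ?case by (simp add: proj_br ig_right proj_mag)
qed

lemma proj_jac: "proj S (jacobi a b c) = jacobi (proj S a) (proj S b) (proj S c)"
  by (simp add: jacobi_def madd_eq proj_add proj_br)

lemma proj_lie: "g \<in> lie_rels T \<Longrightarrow> proj S g \<in> lie_rels S"
proof -
  assume "g \<in> lie_rels T"
  then consider a where "a \<in> mag T" "g = br a a"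
    | a b c where "a \<in> mag T" "b \<in> mag T" "c \<in> mag T" "g = jacobi a b c"
    unfolding lie_rels_def by blast
  then show ?thesis
  proof cases
    case 1 then show ?thesis using lie_sq[OF proj_mag[OF 1(1)]] by (simp add: proj_br)
  next
    case 2 then show ?thesis using lie_jac[OF proj_mag[OF 2(1)] proj_mag[OF 2(2)] proj_mag[OF 2(3)]]
      by (simp add: proj_jac)
  qed
qed

lemma bs_mag: "f \<in> bracket_span S \<Longrightarrow> f \<in> mag S"
  by (induction rule: bracket_span.induct) (auto simp: zero_eq intro: mag_br, metis madd_eq mag_add)
lemma bs_leaf: "f \<in> bracket_span S \<Longrightarrow> f (Leaf y) = 0"
  by (induction rule: bracket_span.induct) (auto simp: madd_def)
lemma bs_zero[simp]: "(0::'a ltree \<Rightarrow> 'k::field) \<in> bracket_span S"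
  using bracket_span.zero by (simp add: zero_eq)
lemma bs_zero'[simp]: "((\<lambda>_. 0)::'a ltree \<Rightarrow> 'k::field) \<in> bracket_span S"
  by (rule bracket_span.zero)
lemma bs_add: "f \<in> bracket_span S \<Longrightarrow> g \<in> bracket_span S \<Longrightarrow> f + g \<in> bracket_span S"
  by (metis bracket_span.add madd_eq)
lemma bs_br: "a \<in> mag S \<Longrightarrow> b \<in> mag S \<Longrightarrow> br a b \<in> bracket_span S"
  by (rule bracket_span.brk)
lemma bs_smult: "f \<in> bracket_span S \<Longrightarrow> msmult c f \<in> bracket_span S"
proof (induction rule: bracket_span.induct)
  case zero then show ?case using bracket_span.zero by (simp add: msmult_def)
next
  case (brk a b) then show ?case by (metis br_smult1 bs_br mag_smult)
next
  case (add f g)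
  have "msmult c (madd f g) = madd (msmult c f) (msmult c g)"
    by (simp add: msmult_def madd_def fun_eq_iff algebra_simps)
  then show ?case using add bracket_span.add by metis
qed
lemma bs_neg: "f \<in> bracket_span S \<Longrightarrow> - f \<in> bracket_span S"
  using bs_smult[of f S "-1"] by (simp add: msmult_neg)
lemma bs_sub: "f \<in> bracket_span S \<Longrightarrow> g \<in> bracket_span S \<Longrightarrow> f - g \<in> bracket_span S"
  using bs_add[of f S "-g"] bs_neg[of g S] by simp

lemma dl_nonleaf:
  fixes G' :: "('a ltree \<Rightarrow> 'k::field) set"
  assumes "T \<subseteq> S" and "\<forall>y\<in>T. \<forall>z\<in>T. br (gen y) (gen z) \<in> ideal_gen S G'"
  shows "leaves t \<subseteq> T \<Longrightarrow> (\<forall>x. t \<noteq> Leaf x) \<Longrightarrow> (dl t :: 'a ltree \<Rightarrow> 'k) \<in> ideal_gen S G'"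
proof (induction t)
  case (Leaf x) then show ?case by simp
next
  case (Br s u)
  have ms: "(dl s :: 'a ltree \<Rightarrow> 'k) \<in> mag S" "(dl u :: 'a ltree \<Rightarrow> 'k) \<in> mag S"
    using Br.prems assms(1) by (auto intro!: mag_dl)
  show ?case
  proof (cases "\<exists>x. s = Leaf x")
    case True
    then obtain y where y: "s = Leaf y" by blast
    show ?thesis
    proof (cases "\<exists>x. u = Leaf x")
      case True
      then obtain z where z: "u = Leaf z" by blast
      show ?thesis using Br.prems assms(2) y z by (simp add: br_dl[symmetric] gen_dl)
    next
      case False
      then have "dl u \<in> ideal_gen S G'" using Br.IH(2) Br.prems by auto
      then show ?thesis using ms by (metis br_dl ig_left)
    qed
  next
    case False
    then have "dl s \<in> ideal_gen S G'" using Br.IH(1) Br.prems by auto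
    then show ?thesis using ms by (metis br_dl ig_right)
  qed
qed

lemma nonleaf_in:
  fixes G' :: "('a ltree \<Rightarrow> 'k::field) set"
  assumes "T \<subseteq> S" and "\<forall>y\<in>T. \<forall>z\<in>T. br (gen y) (gen z) \<in> ideal_gen S G'"
    and "finite {t. f t \<noteq> 0}" and "\<forall>y. f (Leaf y) = 0" and "\<forall>t. f t \<noteq> 0 \<longrightarrow> leaves t \<subseteq> T"
  shows "f \<in> ideal_gen S G'"
proof (rule decomp[OF assms(3)])
  fix t assume "f t \<noteq> 0"
  then show "dl t \<in> ideal_gen S G'" using assms dl_nonleaf[OF assms(1,2)] by (metis (full_types))
qed (auto intro: ig_add ig_smult)

lemma proj_bs_props:
  assumes "g \<in> bracket_span A"
  shows "finite {t. proj S g t \<noteq> 0}" "\<forall>y. proj S g (Leaf y) = 0"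
    "\<forall>t. proj S g t \<noteq> 0 \<longrightarrow> leaves t \<subseteq> A \<inter> S"
  using proj_mag[OF bs_mag[OF assms], of S] bs_mag[OF assms] bs_leaf[OF assms]
  by (auto simp: mag_def proj_def)

locale arr =
  fixes E :: "'a set" and \<A> :: "'a set set"
    and RA :: "'a set \<Rightarrow> ('a ltree \<Rightarrow> 'k::field) set"
    and k :: nat and Bs :: "nat \<Rightarrow> 'a set set"
  assumes finE: "finite E"
    and sarr: "set_arrangement E \<A>"
    and RAd: "\<forall>A\<in>\<A>. RA A \<subseteq> derived A (pres_ideal A {})"
    and cl: "\<forall>i<k. closed_in_arr \<A> (Bs i)"
    and dis: "\<forall>i<k. \<forall>j<k. i \<noteq> j \<longrightarrow> Bs i \<inter> Bs j = {}"
    and un: "(\<Union>i<k. Bs i) = \<A>"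
begin

abbreviation "S i \<equiv> supp (Bs i)"
abbreviation "IL \<equiv> pres_ideal E (arr_rels \<A> RA E)"
abbreviation "IB \<equiv> (\<lambda>i. pres_ideal (supp (Bs i)) (arr_rels (Bs i) RA (supp (Bs i))))"
abbreviation "G \<equiv> {br (gen x) u | i x u. i < k \<and> x \<in> E - supp (Bs i)
                \<and> u \<in> derived (supp (Bs i)) (IB i)}"
abbreviation "I0 \<equiv> ideal_gen E (lie_rels E \<union> arr_rels \<A> RA E \<union> G)"

lemma A_sub: "A \<in> \<A> \<Longrightarrow> A \<subseteq> E"
  using sarr by (auto simp: set_arrangement_def)

lemma Bs_sub: "i < k \<Longrightarrow> Bs i \<subseteq> \<A>"
  using cl by (auto simp: closed_in_arr_def)

lemma S_sub: "i < k \<Longrightarrow> S i \<subseteq> E"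
  using Bs_sub A_sub by (auto simp: supp_def)

lemma cl_eq:
  assumes "i < k" "A \<in> \<A>" "A \<notin> Bs i" "y \<in> A" "y \<in> S i" "z \<in> A" "z \<in> S i"
  shows "y = z"
proof -
  have "card (A \<inter> S i) \<le> Suc 0" using cl assms(1-3) by (auto simp: closed_in_arr_def)
  moreover have "finite (A \<inter> S i)" using A_sub[OF assms(2)] finE by (auto intro: finite_subset)
  ultimately show ?thesis using assms(4-) card_le_Suc0_iff_eq by blast
qed

lemma RA_mag: "A \<in> \<A> \<Longrightarrow> RA A \<subseteq> mag A"
  using RAd by (auto simp: derived_def)

lemma IB_gen: "g \<in> lie_rels (S j) \<union> arr_rels (Bs j) RA (S j) \<Longrightarrow> g \<in> IB j"
  by (simp add: pres_ideal_def ig_gen)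

lemma L6:
  assumes "j < k" "A \<in> \<A>" "A \<notin> Bs j" "f \<in> RA A"
  shows "proj (S j) f \<in> IB j"
proof -
  from assms RAd obtain g where f: "f \<in> mag A" and g: "g \<in> bracket_span A"
    and fg: "msub f g \<in> pres_ideal A {}" by (auto simp: derived_def)
  have "proj (S j) (f - g) \<in> IB j"
    unfolding pres_ideal_def[of "S j"]
  proof (rule proj_ideal)
    show "f - g \<in> ideal_gen A (lie_rels A \<union> {})" using fg by (simp add: pres_ideal_def msub_eq)
  next
    fix h :: "'a ltree \<Rightarrow> 'k" assume "h \<in> lie_rels A \<union> {}"
    then show "proj (S j) h \<in> ideal_gen (S j) (lie_rels (S j) \<union> arr_rels (Bs j) RA (S j))"
      by (auto intro: ig_gen proj_lie)
  qed
  moreover have "proj (S j) g \<in> IB j"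
    unfolding pres_ideal_def[of "S j"]
  proof (rule nonleaf_in[of "A \<inter> S j"])
    show "\<forall>y\<in>A \<inter> S j. \<forall>z\<in>A \<inter> S j. br (gen y) (gen z) \<in> ideal_gen (S j) (lie_rels (S j) \<union> arr_rels (Bs j) RA (S j))"
    proof (intro ballI)
      fix y z assume "y \<in> A \<inter> S j" "z \<in> A \<inter> S j"
      then have "y = z" "y \<in> S j" using cl_eq[OF assms(1-3)] by auto
      then show "br (gen y) (gen z) \<in> ideal_gen (S j) (lie_rels (S j) \<union> arr_rels (Bs j) RA (S j))"
        by (auto intro!: ig_gen lie_sq mag_gen)
    qed
  qed (use proj_bs_props[OF g, of "S j"] in auto)
  ultimately have "proj (S j) (f - g) + proj (S j) g \<in> IB j" by (simp add: pres_ideal_def ig_add)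
  then show ?thesis by (simp add: proj_sub[symmetric] proj_add[symmetric])
qed

lemma Q:
  assumes "i < k" "j < k" "i \<noteq> j" "y \<in> S i" "y \<in> S j" "z \<in> S i" "z \<in> S j"
  shows "br (gen y) (gen z) \<in> IB j"
proof (cases "y = z")
  case True
  then show ?thesis using assms by (auto intro!: IB_gen lie_sq mag_gen)
next
  case False
  have "\<forall>B\<in>Bs j. \<not> {y, z} \<subseteq> B"
  proof (intro ballI notI)
    fix B assume B: "B \<in> Bs j" "{y, z} \<subseteq> B"
    then have "B \<in> \<A>" using Bs_sub assms(2) by auto
    moreover have "B \<notin> Bs i" using dis assms B by auto
    ultimately have "y = z" using cl_eq[OF assms(1)] B assms by auto
    then show False using False by simp
  qed
  then have "br (gen y) (gen z) \<in> arr_rels (Bs j) RA (S j)"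
    unfolding arr_rels_def using assms by blast
  then show ?thesis by (auto intro!: IB_gen)
qed

lemma projIB:
  assumes "i < k" "j < k" "i \<noteq> j" "f \<in> IB i"
  shows "proj (S j) f \<in> IB j"
  unfolding pres_ideal_def[of "S j"]
proof (rule proj_ideal)
  show "f \<in> ideal_gen (S i) (lie_rels (S i) \<union> arr_rels (Bs i) RA (S i))"
    using assms(4) by (simp add: pres_ideal_def)
next
  fix h assume h: "h \<in> lie_rels (S i) \<union> arr_rels (Bs i) RA (S i)"
  show "proj (S j) h \<in> ideal_gen (S j) (lie_rels (S j) \<union> arr_rels (Bs j) RA (S j))"
  proof -
    consider "h \<in> lie_rels (S i)" | B where "B \<in> Bs i" "h \<in> RA B"
      | y z where "y \<in> S i" "z \<in> S i" "h = br (gen y) (gen z)"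
      using h unfolding arr_rels_def by blast
    then show ?thesis
    proof cases
      case 1 then show ?thesis by (auto intro: ig_gen proj_lie)
    next
      case 2
      have "Bs i \<inter> Bs j = {}" using dis assms by blast
      then have "B \<in> \<A>" "B \<notin> Bs j" using 2 Bs_sub assms by auto
      then show ?thesis using L6[OF assms(2)] 2 by (simp add: pres_ideal_def)
    next
      case 3
      show ?thesis
      proof (cases "y \<in> S j \<and> z \<in> S j")
        case True
        then show ?thesis using Q[OF assms(1-3)] 3 by (simp add: proj_br proj_gen pres_ideal_def)
      next
        case False
        then show ?thesis using 3 by (auto simp: proj_br proj_gen)
      qed
    qed
  qed
qed

lemma proj_bs_other:
  assumes "i < k" "j < k" "i \<noteq> j" "g \<in> bracket_span (S i)"
  shows "proj (S j) g \<in> IB j"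
  unfolding pres_ideal_def[of "S j"]
proof (rule nonleaf_in[of "S i \<inter> S j"])
  show "\<forall>y\<in>S i \<inter> S j. \<forall>z\<in>S i \<inter> S j. br (gen y) (gen z) \<in> ideal_gen (S j) (lie_rels (S j) \<union> arr_rels (Bs j) RA (S j))"
    using Q[OF assms(1-3)] by (simp add: pres_ideal_def)
qed (use proj_bs_props[OF assms(4), of "S j"] in auto)

lemma proj_der_other:
  assumes "i < k" "j < k" "i \<noteq> j" "u \<in> derived (S i) (IB i)"
  shows "proj (S j) u \<in> IB j"
proof -
  from assms(4) obtain g where g: "g \<in> bracket_span (S i)" and ug: "u - g \<in> IB i"
    by (auto simp: derived_def msub_eq)
  have "proj (S j) (u - g) + proj (S j) g \<in> IB j"
    using projIB[OF assms(1-3) ug] proj_bs_other[OF assms(1-3) g] by (simp add: pres_ideal_def ig_add)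
  then show ?thesis by (simp add: proj_sub[symmetric] proj_add[symmetric])
qed

lemma L7:
  assumes "j < k" "f \<in> I0"
  shows "proj (S j) f \<in> IB j"
  unfolding pres_ideal_def[of "S j"]
proof (rule proj_ideal[OF _ assms(2)])
  fix h assume h: "h \<in> lie_rels E \<union> arr_rels \<A> RA E \<union> G"
  consider "h \<in> lie_rels E" | A where "A \<in> \<A>" "h \<in> RA A"
      | y z where "y \<in> E" "z \<in> E" "\<forall>A\<in>\<A>. \<not> {y, z} \<subseteq> A" "h = br (gen y) (gen z)"
      | i x u where "i < k" "x \<in> E - S i" "u \<in> derived (S i) (IB i)" "h = br (gen x) u"
    using h unfolding arr_rels_def by blast
  then show "proj (S j) h \<in> ideal_gen (S j) (lie_rels (S j) \<union> arr_rels (Bs j) RA (S j))"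
  proof cases
    case 1 then show ?thesis by (auto intro: ig_gen proj_lie)
  next
    case 2
    show ?thesis
    proof (cases "A \<in> Bs j")
      case True
      then have "h \<in> mag (S j)" using RA_mag[OF 2(1)] 2(2) by (auto intro: mag_mono simp: supp_def)
      then have "proj (S j) h = h" by (rule proj_id)
      moreover have "h \<in> arr_rels (Bs j) RA (S j)" using True 2 by (auto simp: arr_rels_def)
      ultimately show ?thesis by (auto intro: ig_gen)
    next
      case False
      then show ?thesis using L6[OF assms(1) 2(1) False 2(2)] by (simp add: pres_ideal_def)
    qed
  next
    case 3
    show ?thesis
    proof (cases "y \<in> S j \<and> z \<in> S j")
      case True
      have "\<forall>B\<in>Bs j. \<not> {y, z} \<subseteq> B" using 3 Bs_sub[OF assms(1)] by auto
      then have "br (gen y) (gen z) \<in> arr_rels (Bs j) RA (S j)"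
        unfolding arr_rels_def using True by blast
      then show ?thesis using True 3 by (auto simp: proj_br proj_gen intro: ig_gen)
    next
      case False
      then show ?thesis using 3 by (auto simp: proj_br proj_gen)
    qed
  next
    case 4
    show ?thesis
    proof (cases "x \<in> S j")
      case True
      then have "i \<noteq> j" using 4 by auto
      then have "proj (S j) u \<in> IB j" using proj_der_other[OF 4(1) assms(1) _ 4(3)] by simp
      then show ?thesis using True 4 by (auto simp: proj_br proj_gen pres_ideal_def intro: ig_left mag_gen)
    next
      case False
      then show ?thesis using 4 by (auto simp: proj_br proj_gen)
    qed
  qed
qed

lemma lie_rels_mono: "S1 \<subseteq> S2 \<Longrightarrow> lie_rels S1 \<subseteq> lie_rels S2"
  unfolding lie_rels_def using mag_mono by blast

lemma IB_sub_I0: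
  assumes "j < k"
  shows "IB j \<subseteq> I0"
proof -
  have gens: "lie_rels (S j) \<union> arr_rels (Bs j) RA (S j) \<subseteq> I0"
  proof
    fix h assume h: "h \<in> lie_rels (S j) \<union> arr_rels (Bs j) RA (S j)"
    consider "h \<in> lie_rels (S j)" | B where "B \<in> Bs j" "h \<in> RA B"
      | y z where "y \<in> S j" "z \<in> S j" "\<forall>B\<in>Bs j. \<not> {y, z} \<subseteq> B" "h = br (gen y) (gen z)"
      using h unfolding arr_rels_def by blast
    then show "h \<in> I0"
    proof cases
      case 1 then show ?thesis using lie_rels_mono[OF S_sub[OF assms]] by (auto intro: ig_gen)
    next
      case 2 then show ?thesis using Bs_sub[OF assms] by (auto intro!: ig_gen simp: arr_rels_def)
    next
      case 3
      have "\<forall>A\<in>\<A>. \<not> {y, z} \<subseteq> A"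
      proof (intro ballI notI)
        fix A assume A: "A \<in> \<A>" "{y, z} \<subseteq> A"
        show False
        proof (cases "A \<in> Bs j")
          case True then show False using 3 A by auto
        next
          case False
          then have "y = z" using cl_eq[OF assms A(1) False] A 3 by auto
          then obtain B where "B \<in> Bs j" "y \<in> B" using 3 by (auto simp: supp_def)
          then show False using 3 \<open>y = z\<close> by auto
        qed
      qed
      then have "h \<in> arr_rels \<A> RA E" using 3 S_sub[OF assms] unfolding arr_rels_def by blast
      then show ?thesis by (auto intro: ig_gen)
    qed
  qed
  show ?thesis using ig_mono[OF S_sub[OF assms] gens] by (simp add: pres_ideal_def)
qed

lemma IL_sub_I0: "IL \<subseteq> I0"
  unfolding pres_ideal_def by (rule ig_mono) (auto intro: ig_gen)

lemma G_sub_I0: "G \<subseteq> I0"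
  by (auto intro: ig_gen)

lemma gens_mag: "lie_rels E \<union> arr_rels \<A> RA E \<union> G \<subseteq> mag E"
proof
  fix h assume h: "h \<in> lie_rels E \<union> arr_rels \<A> RA E \<union> G"
  consider "h \<in> lie_rels E" | A where "A \<in> \<A>" "h \<in> RA A"
      | y z where "y \<in> E" "z \<in> E" "h = br (gen y) (gen z)"
      | i x u where "i < k" "x \<in> E - S i" "u \<in> derived (S i) (IB i)" "h = br (gen x) u"
    using h unfolding arr_rels_def by blast
  then show "h \<in> mag E"
  proof cases
    case 1 then show ?thesis using lie_rels_mag[of E] by (rule subsetD[rotated])
  next
    case 2
    then have "h \<in> mag A" using RA_mag[OF 2(1)] by blast
    then show ?thesis using mag_mono[OF A_sub[OF 2(1)]] by blast
  next
    case 3 then show ?thesis by (auto intro: mag_br mag_gen)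
  next
    case 4
    then have "u \<in> mag (S i)" by (auto simp: derived_def)
    then have "u \<in> mag E" using mag_mono[OF S_sub[OF 4(1)]] by blast
    then show ?thesis using 4 by (auto intro: mag_br mag_gen)
  qed
qed

lemma I0_mag: "I0 \<subseteq> mag E"
  using ig_mag[OF gens_mag] .

lemma IL_ideal: "IL = ideal_gen E (lie_rels E \<union> arr_rels \<A> RA E)"
  by (simp add: pres_ideal_def)

lemma IL_zero: "(0::'a ltree \<Rightarrow> 'k) \<in> IL"
  unfolding IL_ideal by (rule ig_zero)

lemma I0_der: "I0 \<subseteq> derived E IL"
proof
  fix f assume f: "f \<in> I0"
  have "\<exists>g\<in>bracket_span E. f - g \<in> IL" using f
  proof induction
    case (gen h)
    show ?case
    proof (cases "h \<in> G")
      case True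
      then obtain i x u where iu: "i < k" "x \<in> E - S i" "u \<in> derived (S i) (IB i)" "h = br (gen x) u"
        by blast
      then have "u \<in> mag (S i)" by (simp add: derived_def)
      then have "u \<in> mag E" using mag_mono[OF S_sub[OF iu(1)]] by blast
      moreover have "gen x \<in> mag E" using iu(2) by (simp add: mag_gen)
      ultimately have "h \<in> bracket_span E" unfolding iu(4) by (rule bs_br[rotated])
      moreover have "h - h \<in> IL" using IL_zero by simp
      ultimately show ?thesis by blast
    next
      case False
      then have "h \<in> lie_rels E \<union> arr_rels \<A> RA E" using gen by blast
      then have "h \<in> IL" unfolding IL_ideal by (rule ig_gen)
      then have "h - 0 \<in> IL" by simp
      then show ?thesis using bs_zero by blast
    qed
  next
    case zero
    have "(\<lambda>_. 0) - 0 = (0::'a ltree \<Rightarrow> 'k)" by (simp add: fun_eq_iff)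
    then show ?case using IL_zero bs_zero by metis
  next
    case (add f1 f2)
    then obtain g1 g2 where "g1 \<in> bracket_span E" "f1 - g1 \<in> IL" "g2 \<in> bracket_span E" "f2 - g2 \<in> IL"
      by blast
    moreover have eq: "madd f1 f2 - (g1 + g2) = (f1 - g1) + (f2 - g2)" by (simp add: madd_eq)
    moreover have "madd f1 f2 - (g1 + g2) \<in> IL" unfolding eq IL_ideal using calculation(2,4) unfolding IL_ideal by (rule ig_add)
    moreover have "g1 + g2 \<in> bracket_span E" using calculation(1,3) by (rule bs_add)
    ultimately show ?case by blast
  next
    case (smult f1 c)
    then obtain g1 where "g1 \<in> bracket_span E" "f1 - g1 \<in> IL" by blast
    moreover have "msmult c f1 - msmult c g1 = msmult c (f1 - g1)" by (simp add: msmult_def fun_eq_iff algebra_simps)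
    moreover have "msmult c (f1 - g1) \<in> IL" using calculation(2) unfolding IL_ideal by (rule ig_smult)
    moreover have "msmult c g1 \<in> bracket_span E" using calculation(1) by (rule bs_smult)
    ultimately show ?case by (metis (no_types))
  next
    case (left f1 a)
    have "f1 \<in> mag E" using left(1) I0_mag by blast
    then have "br a f1 \<in> bracket_span E" using \<open>a \<in> mag E\<close> by (intro bs_br)
    moreover have "br a f1 - br a f1 \<in> IL" using IL_zero by simp
    ultimately show ?case by blast
  next
    case (right f1 a)
    have "f1 \<in> mag E" using right(1) I0_mag by blast
    then have "br f1 a \<in> bracket_span E" using \<open>a \<in> mag E\<close> by (intro bs_br)
    moreover have "br f1 a - br f1 a \<in> IL" using IL_zero by simp
    ultimately show ?case by blast
  qed
  moreover have "f \<in> mag E" using f I0_mag by blast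
  ultimately show "f \<in> derived E IL" unfolding derived_def msub_eq by blast
qed

end

lemma msmult_sum: "msmult c (\<Sum>i\<in>I. f i) = (\<Sum>i\<in>I. msmult c (f i :: 'a ltree \<Rightarrow> 'k::field))"
proof (induction I rule: infinite_finite_induct)
  case (infinite A) then show ?case by (simp add: msmult_def zero_fun_def)
next
  case empty then show ?case by (simp add: msmult_def zero_fun_def)
next
  case (insert x F)
  have "msmult c (f x + sum f F) = msmult c (f x) + msmult c (sum f F)"
    by (simp add: msmult_def fun_eq_iff algebra_simps)
  then show ?case by (simp only: sum.insert[OF insert(1,2)] insert(3))
qed

lemma diff_add_eq_diff_add': "(a::'b::ab_group_add) + h - c = (a - c) + h"
  by (simp add: algebra_simps)

lemma diff_split': "(a::'b::ab_group_add) - c = (a - b) + (b - c)"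
  by (simp add: algebra_simps)

lemma neg_cancel': "- (a::'b::ab_group_add) + (b + a) = b"
  by (simp add: algebra_simps)

lemma add_diff_add': "(a::'b::ab_group_add) + b - (c + d) = (a - c) + (b - d)"
  by (simp add: algebra_simps)

context arr
begin

lemma I0_add: "a \<in> I0 \<Longrightarrow> b \<in> I0 \<Longrightarrow> a + b \<in> I0" by (rule ig_add)
lemma I0_sub: "a \<in> I0 \<Longrightarrow> b \<in> I0 \<Longrightarrow> a - b \<in> I0" by (rule ig_sub)
lemma I0_neg: "a \<in> I0 \<Longrightarrow> - a \<in> I0" by (rule ig_neg)
lemma I0_left: "c \<in> mag E \<Longrightarrow> a \<in> I0 \<Longrightarrow> br c a \<in> I0" by (rule ig_left)

lemma v_der: "i < k \<Longrightarrow> v \<in> bracket_span (S i) \<Longrightarrow> v \<in> derived (S i) (IB i)"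
  unfolding derived_def msub_eq using bs_mag[of v "S i"]
  by (auto simp: pres_ideal_def intro!: bexI[of _ v])

lemma lieI0: "lie_rels E \<subseteq> lie_rels E \<union> arr_rels \<A> RA E \<union> G" by blast

lemma AD:
  assumes "i < k"
  shows "leaves s \<subseteq> E \<Longrightarrow> v \<in> bracket_span (S i) \<Longrightarrow> \<exists>w\<in>bracket_span (S i). br (dl s) v - w \<in> I0"
proof (induction s arbitrary: v)
  case (Leaf z)
  have vm: "v \<in> mag (S i)" using Leaf.prems(2) by (rule bs_mag)
  show ?case
  proof (cases "z \<in> S i")
    case True
    then have "br (gen z) v \<in> bracket_span (S i)" using vm by (intro bs_br mag_gen)
    moreover have "br (gen z) v - br (gen z) v \<in> I0" by simp
    ultimately show ?thesis unfolding gen_dl by blast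
  next
    case False
    have "z \<in> E - S i" using Leaf.prems(1) False by simp
    then have "br (gen z) v \<in> G" using assms v_der[OF assms Leaf.prems(2)] by blast
    then have "br (gen z) v \<in> I0" by (intro ig_gen) blast
    moreover have "br (gen z) v - 0 = br (gen z) v" by simp
    ultimately have "br (dl (Leaf z)) v - 0 \<in> I0" unfolding gen_dl by simp
    then show ?thesis using bs_zero by blast
  qed
next
  case (Br s1 s2)
  define d1 where "d1 = (dl s1 :: 'a ltree \<Rightarrow> 'k)"
  define d2 where "d2 = (dl s2 :: 'a ltree \<Rightarrow> 'k)"
  have l1: "leaves s1 \<subseteq> E" and l2: "leaves s2 \<subseteq> E" using Br.prems(1) by auto
  have m1: "d1 \<in> mag E" unfolding d1_def using l1 by (rule mag_dl)
  have m2: "d2 \<in> mag E" unfolding d2_def using l2 by (rule mag_dl)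
  have vm: "v \<in> mag E" using bs_mag[OF Br.prems(2)] mag_mono[OF S_sub[OF assms]] by blast
  obtain w2 where w2: "w2 \<in> bracket_span (S i)" "br d2 v - w2 \<in> I0" using Br.IH(2)[OF l2 Br.prems(2)] unfolding d2_def by blast
  obtain w12 where w12: "w12 \<in> bracket_span (S i)" "br d1 w2 - w12 \<in> I0" using Br.IH(1)[OF l1 w2(1)] unfolding d1_def by blast
  obtain w1 where w1: "w1 \<in> bracket_span (S i)" "br d1 v - w1 \<in> I0" using Br.IH(1)[OF l1 Br.prems(2)] unfolding d1_def by blast
  obtain w21 where w21: "w21 \<in> bracket_span (S i)" "br d2 w1 - w21 \<in> I0" using Br.IH(2)[OF l2 w1(1)] unfolding d2_def by blast
  define A1 where "A1 = br (br d1 d2) v + br v (br d1 d2)"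
  define Jc where "Jc = br d1 (br d2 v) + br d2 (br v d1) + br v (br d1 d2)"
  define A2 where "A2 = br d2 (br v d1 + br d1 v)"
  define T1 where "T1 = br d1 (br d2 v - w2)"
  define T2 where "T2 = br d1 w2 - w12"
  define T3 where "T3 = br d2 (br d1 v - w1)"
  define T4 where "T4 = br d2 w1 - w21"
  have eq: "br (br d1 d2) v - (w12 - w21) = A1 - Jc + A2 + T1 + T2 - T3 - T4"
    unfolding A1_def Jc_def A2_def T1_def T2_def T3_def T4_def br_add2 br_sub2
    by (simp only: diff_add_eq add_diff_eq diff_diff_eq2) (simp add: algebra_simps)
  have "A1 \<in> I0" unfolding A1_def by (rule antisym[OF mag_br[OF m1 m2] vm lieI0])
  moreover have "Jc \<in> I0" unfolding Jc_def by (rule jac_in[OF m1 m2 vm lieI0])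
  moreover have "A2 \<in> I0" unfolding A2_def by (rule I0_left[OF m2], rule antisym[OF vm m1 lieI0])
  moreover have "T1 \<in> I0" unfolding T1_def by (rule I0_left[OF m1 w2(2)])
  moreover have "T3 \<in> I0" unfolding T3_def by (rule I0_left[OF m2 w1(2)])
  moreover have "T2 \<in> I0" "T4 \<in> I0" using w12(2) w21(2) unfolding T2_def T4_def by blast+
  ultimately have "A1 - Jc + A2 + T1 + T2 - T3 - T4 \<in> I0"
    by - (rule ig_sub ig_add | assumption)+
  then have "br (br d1 d2) v - (w12 - w21) \<in> I0" unfolding eq .
  moreover have "br d1 d2 = dl (Br s1 s2)" unfolding d1_def d2_def by (rule br_dl)
  ultimately have "br (dl (Br s1 s2)) v - (w12 - w21) \<in> I0" by simp
  moreover have "w12 - w21 \<in> bracket_span (S i)" using w12 w21 by (intro bs_sub)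
  ultimately show ?case by blast
qed

definition P :: "('a ltree \<Rightarrow> 'k) set" where
  "P = {f. \<exists>u. (\<forall>i<k. u i \<in> bracket_span (S i)) \<and> f - (\<Sum>i<k. u i) \<in> I0}"

lemma PI: "\<forall>i<k. u i \<in> bracket_span (S i) \<Longrightarrow> f - (\<Sum>i<k. u i) \<in> I0 \<Longrightarrow> f \<in> P"
  unfolding P_def by (rule CollectI, rule exI[of _ u], rule conjI)

lemma PE:
  assumes "f \<in> P"
  obtains u where "\<forall>i<k. u i \<in> bracket_span (S i)" "f - (\<Sum>i<k. u i) \<in> I0"
proof -
  from assms have "\<exists>u. (\<forall>i<k. u i \<in> bracket_span (S i)) \<and> f - (\<Sum>i<k. u i) \<in> I0"
    unfolding P_def by (rule CollectD)
  then obtain u where "(\<forall>i<k. u i \<in> bracket_span (S i)) \<and> f - (\<Sum>i<k. u i) \<in> I0" by (rule exE)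
  then show ?thesis using that by (elim conjE)
qed

lemma P_zero: "0 \<in> P"
  unfolding P_def
proof (intro CollectI exI[of _ "\<lambda>_. 0"] conjI)
  show "\<forall>i<k. (\<lambda>_. 0::'a ltree \<Rightarrow> 'k) i \<in> bracket_span (S i)" by simp
  have "(0::'a ltree \<Rightarrow> 'k) - (\<Sum>i<k. (\<lambda>_. 0::'a ltree \<Rightarrow> 'k) i) = 0" by (simp only: sum.neutral_const diff_zero)
  then show "(0::'a ltree \<Rightarrow> 'k) - (\<Sum>i<k. (\<lambda>_. 0::'a ltree \<Rightarrow> 'k) i) \<in> I0" by (simp only: ig_zero)
qed

lemma P_add: "f \<in> P \<Longrightarrow> g \<in> P \<Longrightarrow> f + g \<in> P"
proof -
  assume "f \<in> P" "g \<in> P"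
  obtain u where u: "\<forall>i<k. u i \<in> bracket_span (S i)" "f - (\<Sum>i<k. u i) \<in> I0"
    using PE[OF \<open>f \<in> P\<close>] by blast
  obtain v where v: "\<forall>i<k. v i \<in> bracket_span (S i)" "g - (\<Sum>i<k. v i) \<in> I0"
    using PE[OF \<open>g \<in> P\<close>] by blast
  have eq: "(f + g) - (\<Sum>i<k. u i + v i) = (f - (\<Sum>i<k. u i)) + (g - (\<Sum>i<k. v i))"
    by (simp only: sum.distrib add_diff_add')
  have "(f + g) - (\<Sum>i<k. u i + v i) \<in> I0" unfolding eq using u(2) v(2) by (rule I0_add)
  moreover have "\<forall>i<k. u i + v i \<in> bracket_span (S i)" using u v by (auto intro: bs_add)
  ultimately show ?thesis by (intro PI)
qed

lemma P_smult: "f \<in> P \<Longrightarrow> msmult c f \<in> P"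
proof -
  assume "f \<in> P"
  then obtain u where u: "\<forall>i<k. u i \<in> bracket_span (S i)" "f - (\<Sum>i<k. u i) \<in> I0"
    by (rule PE)
  have eq: "msmult c f - (\<Sum>i<k. msmult c (u i)) = msmult c (f - (\<Sum>i<k. u i))"
    unfolding msmult_sum[symmetric] by (simp add: msmult_def fun_eq_iff algebra_simps)
  have "msmult c f - (\<Sum>i<k. msmult c (u i)) \<in> I0" unfolding eq using u(2) by (rule ig_smult)
  moreover have "\<forall>i<k. msmult c (u i) \<in> bracket_span (S i)" using u by (auto intro: bs_smult)
  ultimately show ?thesis by (intro PI)
qed

lemma P_neg: "f \<in> P \<Longrightarrow> - f \<in> P"
  using P_smult[of f "-1"] by (simp add: msmult_neg)

lemma P_I0: "f \<in> P \<Longrightarrow> h \<in> I0 \<Longrightarrow> f + h \<in> P"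
proof -
  assume "f \<in> P" "h \<in> I0"
  from \<open>f \<in> P\<close> obtain u where u: "\<forall>i<k. u i \<in> bracket_span (S i)" "f - (\<Sum>i<k. u i) \<in> I0"
    by (rule PE)
  have eq: "(f + h) - (\<Sum>i<k. u i) = (f - (\<Sum>i<k. u i)) + h" by (rule diff_add_eq_diff_add')
  have "(f + h) - (\<Sum>i<k. u i) \<in> I0" unfolding eq using u(2) \<open>h \<in> I0\<close> by (rule I0_add)
  then show ?thesis using u(1) by (intro PI)
qed

lemma NT':
  assumes "leaves s \<subseteq> E" "f \<in> P"
  shows "br (dl s) f \<in> P"
proof -
  obtain u where u: "\<forall>i<k. u i \<in> bracket_span (S i)" "f - (\<Sum>i<k. u i) \<in> I0"
    using assms(2) by (rule PE)
  have dm: "dl s \<in> mag E" using assms(1) by (rule mag_dl)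
  define w where "w i = (SOME w. w \<in> bracket_span (S i) \<and> br (dl s) (u i) - w \<in> I0)" for i
  have w: "w i \<in> bracket_span (S i) \<and> br (dl s) (u i) - w i \<in> I0" if i: "i < k" for i
  proof -
    have "\<exists>w\<in>bracket_span (S i). br (dl s) (u i) - w \<in> I0"
      using AD[OF i assms(1)] u(1) i by blast
    then have "\<exists>w. w \<in> bracket_span (S i) \<and> br (dl s) (u i) - w \<in> I0" by (simp only: Bex_def)
    then show ?thesis unfolding w_def by (rule someI_ex)
  qed
  have eq: "br (dl s) f - (\<Sum>i<k. w i) = br (dl s) (f - (\<Sum>i<k. u i)) + (\<Sum>i<k. br (dl s) (u i) - w i)"
    unfolding br_sub2 br_sum2 sum_subtractf by (rule diff_split')
  have "br (dl s) (f - (\<Sum>i<k. u i)) \<in> I0" using I0_left[OF dm u(2)] .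
  moreover have "(\<Sum>i<k. br (dl s) (u i) - w i) \<in> I0" using w by (intro ig_sum) blast
  ultimately have "br (dl s) f - (\<Sum>i<k. w i) \<in> I0" unfolding eq by (rule I0_add)
  moreover have "\<forall>i<k. w i \<in> bracket_span (S i)" using w by blast
  ultimately show ?thesis by (intro PI)
qed

lemma NT:
  "leaves t \<subseteq> E \<Longrightarrow> (\<forall>x. t \<noteq> Leaf x) \<Longrightarrow> dl t \<in> P"
proof (induction t)
  case (Leaf x) then show ?case by simp
next
  case (Br s t')
  show ?case
  proof (cases "\<exists>z. t' = Leaf z")
    case False
    then have "dl t' \<in> P" using Br by auto
    then have "br (dl s) (dl t') \<in> P" using NT' Br.prems by auto
    then show ?thesis by (simp add: br_dl)
  next
    case True
    then obtain z where z: "t' = Leaf z" by blast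
    show ?thesis
    proof (cases "\<exists>x. s = Leaf x")
      case False
      then have ds: "dl s \<in> P" using Br by auto
      have zE: "z \<in> E" using Br.prems z by auto
      have "br (dl (Leaf z)) (dl s) \<in> P" using NT'[OF _ ds] zE by auto
      then have "- br (gen z) (dl s) \<in> P" by (simp add: gen_dl P_neg)
      moreover have "br (dl s) (gen z) + br (gen z) (dl s) \<in> I0"
        using Br.prems zE by (intro antisym) (auto intro: mag_dl mag_gen)
      ultimately have "- br (gen z) (dl s) + (br (dl s) (gen z) + br (gen z) (dl s)) \<in> P"
        by (rule P_I0)
      then have "br (dl s) (gen z) \<in> P" by (simp only: neg_cancel')
      then show ?thesis by (simp only: z gen_dl br_dl)
    next
      case True
      then obtain x where x: "s = Leaf x" by blast
      have xy: "x \<in> E" "z \<in> E" using Br.prems x z by auto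
      show ?thesis
      proof (cases "\<exists>A\<in>\<A>. {x, z} \<subseteq> A")
        case True
        then obtain A where A: "A \<in> \<A>" "{x, z} \<subseteq> A" by blast
        then obtain i where i: "i < k" "A \<in> Bs i" using un by auto
        have xz: "x \<in> S i" "z \<in> S i" using A i by (auto simp: supp_def)
        define u where "u = (\<lambda>j. if j = i then br (gen x) (gen z) else (0::'a ltree \<Rightarrow> 'k))"
        have "\<forall>j<k. u j \<in> bracket_span (S j)" using xz by (auto simp: u_def intro: bs_br mag_gen)
        moreover have "(\<Sum>j<k. u j) = br (gen x) (gen z)" using i by (simp add: u_def)
        then have "br (gen x) (gen z) - (\<Sum>j<k. u j) = 0" by simp
        then have "br (gen x) (gen z) - (\<Sum>j<k. u j) \<in> I0" by (simp only: ig_zero)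
        ultimately have "br (gen x) (gen z) \<in> P" by (intro PI)
        then show ?thesis by (simp only: x z gen_dl br_dl)
      next
        case False
        then have "br (gen x) (gen z) \<in> arr_rels \<A> RA E" using xy unfolding arr_rels_def by blast
        then have "br (gen x) (gen z) \<in> I0" by (auto intro: ig_gen)
        then have "0 + br (gen x) (gen z) \<in> P" by (rule P_I0[OF P_zero])
        then show ?thesis by (simp only: x z gen_dl br_dl add_0_left)
      qed
    qed
  qed
qed

lemma SL: "g \<in> bracket_span E \<Longrightarrow> g \<in> P"
proof -
  assume g: "g \<in> bracket_span E"
  have gm: "g \<in> mag E" using g by (rule bs_mag)
  show ?thesis
  proof (rule decomp)
    show "finite {t. g t \<noteq> 0}" using gm by (simp add: mag_def)
  next
    fix t assume t: "g t \<noteq> 0"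
    then have "leaves t \<subseteq> E" using gm by (simp add: mag_def)
    moreover have "\<forall>x. t \<noteq> Leaf x" using t bs_leaf[OF g] by auto
    ultimately show "dl t \<in> P" by (rule NT)
  qed (auto intro: P_zero P_add P_smult)
qed

end

lemma diff_add_diff_cancel': "((a::'b::ab_group_add) - b) + (b - c) = a - c"
  by (simp add: algebra_simps)
lemma diff_diff_cancel': "(a::'b::ab_group_add) - (a - b) = b"
  by (simp add: algebra_simps)

context arr
begin

lemma IB_add: "a \<in> IB j \<Longrightarrow> b \<in> IB j \<Longrightarrow> a + b \<in> IB j"
  unfolding pres_ideal_def by (rule ig_add)
lemma IB_sub: "a \<in> IB j \<Longrightarrow> b \<in> IB j \<Longrightarrow> a - b \<in> IB j"
  unfolding pres_ideal_def by (rule ig_sub)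
lemma IB_sum: "(\<And>i. i \<in> I \<Longrightarrow> f i \<in> IB j) \<Longrightarrow> (\<Sum>i\<in>I. f i) \<in> IB j"
  unfolding pres_ideal_def by (rule ig_sum)

lemma J_sub:
  assumes fJ: "f \<in> derived E IL" "\<forall>j<k. proj (S j) f \<in> IB j"
  shows "f \<in> I0"
proof -
  obtain g where g: "g \<in> bracket_span E" "msub f g \<in> IL" using fJ(1) unfolding derived_def by blast
  have "g \<in> P" using g(1) by (rule SL)
  then obtain u where u: "\<forall>i<k. u i \<in> bracket_span (S i)" "g - (\<Sum>i<k. u i) \<in> I0" by (rule PE)
  have "f - g \<in> I0" using g(2) IL_sub_I0 unfolding msub_eq by blast
  then have fu: "f - (\<Sum>i<k. u i) \<in> I0" using u(2) I0_add[of "f - g" "g - (\<Sum>i<k. u i)"]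
    by (simp only: diff_add_diff_cancel')
  have uj: "u j \<in> I0" if j: "j < k" for j
  proof -
    have "proj (S j) (f - (\<Sum>i<k. u i)) \<in> IB j" using L7[OF j fu] .
    then have "proj (S j) f - proj (S j) (f - (\<Sum>i<k. u i)) \<in> IB j"
      using fJ(2) j IB_sub by blast
    then have ps: "(\<Sum>i<k. proj (S j) (u i)) \<in> IB j"
      by (simp only: proj_sub proj_sum diff_diff_cancel')
    have other: "(\<Sum>i\<in>{..<k} - {j}. proj (S j) (u i)) \<in> IB j"
    proof (rule IB_sum)
      fix i assume "i \<in> {..<k} - {j}"
      then have "i < k" "i \<noteq> j" by auto
      then show "proj (S j) (u i) \<in> IB j" using proj_bs_other[OF _ j] u(1) by blast
    qed
    have split: "(\<Sum>i<k. proj (S j) (u i)) = proj (S j) (u j) + (\<Sum>i\<in>{..<k} - {j}. proj (S j) (u i))"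
      using j by (simp add: sum.remove)
    have "proj (S j) (u j) = u j" using bs_mag u(1) j proj_id by blast
    then have "u j = (\<Sum>i<k. proj (S j) (u i)) - (\<Sum>i\<in>{..<k} - {j}. proj (S j) (u i))"
      using split by simp
    then have "u j \<in> IB j" using ps other IB_sub by metis
    then show ?thesis using IB_sub_I0[OF j] by blast
  qed
  have "(\<Sum>i<k. u i) \<in> I0" using uj by (intro ig_sum) blast
  then have "(f - (\<Sum>i<k. u i)) + (\<Sum>i<k. u i) \<in> I0" using fu I0_add by blast
  then show ?thesis by simp
qed

lemma J_eq: "{f \<in> derived E IL. \<forall>i<k. proj (supp (Bs i)) f \<in> IB i} = I0"
proof
  show "{f \<in> derived E IL. \<forall>i<k. proj (supp (Bs i)) f \<in> IB i} \<subseteq> I0"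
    using J_sub by blast
next
  show "I0 \<subseteq> {f \<in> derived E IL. \<forall>i<k. proj (supp (Bs i)) f \<in> IB i}"
    using I0_der L7 by blast
qed

lemma final:
  "{f \<in> derived E IL. \<forall>i<k. proj (supp (Bs i)) f \<in> IB i} = I0
   \<and> ({f \<in> derived E IL. \<forall>i<k. proj (supp (Bs i)) f \<in> IB i} = IL \<longleftrightarrow>
      (\<forall>i<k. \<forall>x\<in>E - supp (Bs i). \<forall>u\<in>derived (supp (Bs i)) (IB i). br (gen x) u \<in> IL))"
proof (intro conjI)
  show "{f \<in> derived E IL. \<forall>i<k. proj (supp (Bs i)) f \<in> IB i} = I0" by (rule J_eq)
  show "({f \<in> derived E IL. \<forall>i<k. proj (supp (Bs i)) f \<in> IB i} = IL \<longleftrightarrow>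
      (\<forall>i<k. \<forall>x\<in>E - supp (Bs i). \<forall>u\<in>derived (supp (Bs i)) (IB i). br (gen x) u \<in> IL))"
    unfolding J_eq
  proof
    assume h: "I0 = IL"
    show "\<forall>i<k. \<forall>x\<in>E - supp (Bs i). \<forall>u\<in>derived (supp (Bs i)) (IB i). br (gen x) u \<in> IL"
    proof (intro allI impI ballI)
      fix i x u assume "i < k" "x \<in> E - supp (Bs i)" "u \<in> derived (supp (Bs i)) (IB i)"
      then have "br (gen x) u \<in> G" by blast
      then have "br (gen x) u \<in> I0" using G_sub_I0 by blast
      then show "br (gen x) u \<in> IL" using h by simp
    qed
  next
    assume h: "\<forall>i<k. \<forall>x\<in>E - supp (Bs i). \<forall>u\<in>derived (supp (Bs i)) (IB i). br (gen x) u \<in> IL"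
    have "G \<subseteq> IL" using h by blast
    moreover have "lie_rels E \<union> arr_rels \<A> RA E \<subseteq> IL" unfolding IL_ideal by (blast intro: ig_gen)
    ultimately have "lie_rels E \<union> arr_rels \<A> RA E \<union> G \<subseteq> ideal_gen E (lie_rels E \<union> arr_rels \<A> RA E)"
      unfolding IL_ideal by blast
    then have "I0 \<subseteq> IL" unfolding IL_ideal by (rule ig_mono[OF subset_refl])
    then show "I0 = IL" using IL_sub_I0 by blast
  qed
qed

end

theorem mainTheorem2:
  fixes E :: "'a set" and \<A> :: "'a set set"
    and RA :: "'a set \<Rightarrow> ('a ltree \<Rightarrow> 'k::field) set"
    and k :: nat and Bs :: "nat \<Rightarrow> 'a set set"
  assumes "finite E"
    and "set_arrangement E \<A>"
    and "\<forall>A\<in>\<A>. RA A \<subseteq> derived A (pres_ideal A {})"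
    and "\<forall>i<k. closed_in_arr \<A> (Bs i)"
    and "\<forall>i<k. \<forall>j<k. i \<noteq> j \<longrightarrow> Bs i \<inter> Bs j = {}"
    and "(\<Union>i<k. Bs i) = \<A>"
  defines "IL \<equiv> pres_ideal E (arr_rels \<A> RA E)"
    and "IB \<equiv> (\<lambda>i. pres_ideal (supp (Bs i)) (arr_rels (Bs i) RA (supp (Bs i))))"
  defines "J \<equiv> {f \<in> derived E IL. \<forall>i<k. proj (supp (Bs i)) f \<in> IB i}"
    and "G \<equiv> {br (gen x) u | i x u. i < k \<and> x \<in> E - supp (Bs i)
                \<and> u \<in> derived (supp (Bs i)) (IB i)}"
  shows "J = ideal_gen E (lie_rels E \<union> arr_rels \<A> RA E \<union> G)
    \<and> (J = IL \<longleftrightarrow> (\<forall>i<k. \<forall>x\<in>E - supp (Bs i). \<forall>u\<in>derived (supp (Bs i)) (IB i).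
                       br (gen x) u \<in> IL))"
proof -
  interpret arr E \<A> RA k Bs
    by (unfold_locales) (use assms(1-6) in auto)
  show ?thesis unfolding J_def G_def IL_def IB_def by (rule final)
qed

end
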